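(* Fix any $\delta>0$ and let $\zeta(r,n)=n^{-\delta}$. Then there is no infinite family of metafunnels that is up-to-$\zeta$ fixating.
   Context: Moran process: given a directed graph $G$ and fitness $r>1$, one vertex (the initial mutant) is a mutant, the rest non-mutants. At each step a vertex $v$ is chosen with probability proportional to fitness (mutants $r$, non-mutants $1$), an out-neighbour $w$ of $v$ is chosen uniformly at random and the state of $v$ is copied to $w$. Extinction: eventually no mutants. An infinite family $\Upsilon$ of directed graphs is up-to-$\zeta$ fixating if for every $r>1$ there is $n_0$ such that for every $G\in\Upsilon$ with $n\ge n_0$ vertices, the extinction probability of the Moran process with fitness $r$ on $G$ from a uniformly random initial mutant is at most $\zeta(r,n)$. For positive integers $k,\ell,m$, the $(k,\ell,m)$-metafunnel has vertex set $V_0\cup V_1\cup\dots\cup V_k$ (disjoint), where $V_0=\{v^*\}$ and for $i\in[k]$, $V_i$ is the disjoint union of sets $V_{i,1},\dots,V_{i,\ell}$ each of size $m^i$; its edge set is $(V_0\times V_k)\cup(V_1\times V_0)\cup\bigcup_{i\in[k-1]}\bigcup_{j\in[\ell]}(V_{i+1,j}\times V_{i,j})$. An infinite family of metafunnels is an infinite set of such graphs. *)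

theory Defs
  imports Complex_Main
begin

text \<open>Directed graphs are pairs (V, E) with a finite vertex set V and edge set E \<subseteq> V \<times> V.
  A state of the Moran process is the set S of mutant vertices.\<close>

definition out_nbrs :: "('v \<times> 'v) set \<Rightarrow> 'v \<Rightarrow> 'v set" where
  "out_nbrs E v = {w. (v, w) \<in> E}"

definition fitness :: "real \<Rightarrow> 'v set \<Rightarrow> 'v \<Rightarrow> real" where
  "fitness r S v = (if v \<in> S then r else 1)"

definition total_fitness :: "'v set \<Rightarrow> real \<Rightarrow> 'v set \<Rightarrow> real" where
  "total_fitness V r S = r * real (card S) + real (card (V - S))"

text \<open>Vertex v reproduces onto out-neighbour w: the state of v is copied to w.\<close>
definition moran_step :: "'v set \<Rightarrow> 'v \<Rightarrow> 'v \<Rightarrow> 'v set" where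
  "moran_step S v w = (if v \<in> S then insert w S else S - {w})"

text \<open>Probability that the process started in state S has reached the all-non-mutant
  state within t steps. (A vertex without out-neighbours does nothing when chosen.)\<close>
fun ext_within :: "'v set \<Rightarrow> ('v \<times> 'v) set \<Rightarrow> real \<Rightarrow> nat \<Rightarrow> 'v set \<Rightarrow> real" where
  "ext_within V E r 0 S = (if S = {} then 1 else 0)"
| "ext_within V E r (Suc t) S =
     (if S = {} then 1 else
       (\<Sum>v\<in>V. fitness r S v / total_fitness V r S *
          (if out_nbrs E v = {} then ext_within V E r t S
           else (\<Sum>w\<in>out_nbrs E v. ext_within V E r t (moran_step S v w))
                  / real (card (out_nbrs E v)))))"

definition extinction_prob :: "'v set \<Rightarrow> ('v \<times> 'v) set \<Rightarrow> real \<Rightarrow> 'v set \<Rightarrow> real" where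
  "extinction_prob V E r S = (SUP t. ext_within V E r t S)"

definition avg_extinction_prob :: "'v set \<Rightarrow> ('v \<times> 'v) set \<Rightarrow> real \<Rightarrow> real" where
  "avg_extinction_prob V E r = (\<Sum>v\<in>V. extinction_prob V E r {v}) / real (card V)"

definition up_to_fixating ::
    "(real \<Rightarrow> nat \<Rightarrow> real) \<Rightarrow> ('v set \<times> ('v \<times> 'v) set) set \<Rightarrow> bool" where
  "up_to_fixating \<zeta> \<Upsilon> \<longleftrightarrow> infinite \<Upsilon> \<and>
     (\<forall>r>1. \<exists>n0. \<forall>G\<in>\<Upsilon>. card (fst G) \<ge> n0 \<longrightarrow>
        avg_extinction_prob (fst G) (snd G) r \<le> \<zeta> r (card (fst G)))"

text \<open>The (k,l,m)-metafunnel. Vertex (0,0,0) is v*; vertex (i,j,x) with 1\<le>i\<le>k, 1\<le>j\<le>l,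
  x < m^i belongs to V_{i,j}.\<close>
definition metafunnel_V :: "nat \<Rightarrow> nat \<Rightarrow> nat \<Rightarrow> (nat \<times> nat \<times> nat) set" where
  "metafunnel_V k l m = {(0,0,0)} \<union>
     {(i,j,x). 1 \<le> i \<and> i \<le> k \<and> 1 \<le> j \<and> j \<le> l \<and> x < m ^ i}"

definition metafunnel_E :: "nat \<Rightarrow> nat \<Rightarrow> nat \<Rightarrow> ((nat \<times> nat \<times> nat) \<times> (nat \<times> nat \<times> nat)) set" where
  "metafunnel_E k l m =
     {((0,0,0), (i,j,x)) | i j x. (i,j,x) \<in> metafunnel_V k l m \<and> i = k \<and> k \<ge> 1}
   \<union> {((i,j,x), (0,0,0)) | i j x. (i,j,x) \<in> metafunnel_V k l m \<and> i = 1}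
   \<union> {((i',j,x), (i,j,y)) | i' i j x y. (i',j,x) \<in> metafunnel_V k l m \<and>
        (i,j,y) \<in> metafunnel_V k l m \<and> 1 \<le> i \<and> i < k \<and> i' = i + 1}"

definition metafunnel :: "nat \<Rightarrow> nat \<Rightarrow> nat \<Rightarrow>
    (nat \<times> nat \<times> nat) set \<times> ((nat \<times> nat \<times> nat) \<times> (nat \<times> nat \<times> nat)) set" where
  "metafunnel k l m = (metafunnel_V k l m, metafunnel_E k l m)"

end

theory Submission
  imports Defs
begin


definition Pop :: "'v set \<Rightarrow> ('v \<times> 'v) set \<Rightarrow> real \<Rightarrow> ('v set \<Rightarrow> real) \<Rightarrow> 'v set \<Rightarrow> real" where
  "Pop V E r h S = (\<Sum>v\<in>V. fitness r S v / total_fitness V r S *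
          (if out_nbrs E v = {} then h S
           else (\<Sum>w\<in>out_nbrs E v. h (moran_step S v w)) / real (card (out_nbrs E v))))"

lemma ext_Suc: "ext_within V E r (Suc t) S = (if S = {} then 1 else Pop V E r (ext_within V E r t) S)"
  by (simp add: Pop_def)

locale gsetting =
  fixes V :: "'v set" and E :: "('v \<times> 'v) set" and r :: real
  assumes finV: "finite V" and EV: "E \<subseteq> V \<times> V" and rpos: "r > 0"
begin

lemma out_sub: "out_nbrs E v \<subseteq> V"
  using EV by (auto simp: out_nbrs_def)

lemma out_fin: "finite (out_nbrs E v)"
  using out_sub finV finite_subset by blast

lemma step_sub: "S \<subseteq> V \<Longrightarrow> w \<in> out_nbrs E v \<Longrightarrow> moran_step S v w \<subseteq> V"
  using out_sub by (auto simp: moran_step_def)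

lemma W_pos: "S \<subseteq> V \<Longrightarrow> S \<noteq> {} \<Longrightarrow> total_fitness V r S > 0"
proof -
  assume "S \<subseteq> V" "S \<noteq> {}"
  then have "card S > 0" using finV finite_subset card_gt_0_iff by blast
  then show ?thesis using rpos unfolding total_fitness_def
    by (simp add: add_pos_nonneg)
qed

lemma sum_fit: "S \<subseteq> V \<Longrightarrow> (\<Sum>v\<in>V. fitness r S v) = total_fitness V r S"
proof -
  assume S: "S \<subseteq> V"
  have "(\<Sum>v\<in>V. fitness r S v) = (\<Sum>v\<in>V \<inter> {x. x \<in> S}. r) + (\<Sum>v\<in>V \<inter> - {x. x \<in> S}. 1)"
    unfolding fitness_def by (rule sum.If_cases[OF finV])
  also have "V \<inter> {x. x \<in> S} = S" using S by auto
  also have "V \<inter> - {x. x \<in> S} = V - S" by auto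
  finally show ?thesis unfolding total_fitness_def by (simp add: mult.commute)
qed

lemma sum_a: "S \<subseteq> V \<Longrightarrow> S \<noteq> {} \<Longrightarrow> (\<Sum>v\<in>V. fitness r S v / total_fitness V r S) = 1"
proof -
  assume S: "S \<subseteq> V" "S \<noteq> {}"
  have "(\<Sum>v\<in>V. fitness r S v / total_fitness V r S) = (\<Sum>v\<in>V. fitness r S v) / total_fitness V r S"
    by (simp add: sum_divide_distrib)
  then show ?thesis using sum_fit[OF S(1)] W_pos[OF S] by simp
qed

lemma a_nonneg: "S \<subseteq> V \<Longrightarrow> S \<noteq> {} \<Longrightarrow> fitness r S v / total_fitness V r S \<ge> 0"
  using W_pos[of S] rpos by (auto simp: fitness_def)

lemma Pop_add: assumes S: "S \<subseteq> V" "S \<noteq> {}"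
  shows "Pop V E r (\<lambda>T. h T + c) S = Pop V E r h S + c"
proof -
  have inner: "(if out_nbrs E v = {} then h S + c
           else (\<Sum>w\<in>out_nbrs E v. h (moran_step S v w) + c) / real (card (out_nbrs E v)))
     = (if out_nbrs E v = {} then h S
           else (\<Sum>w\<in>out_nbrs E v. h (moran_step S v w)) / real (card (out_nbrs E v))) + c" for v
  proof (cases "out_nbrs E v = {}")
    case False
    then have "card (out_nbrs E v) > 0" using out_fin card_gt_0_iff by blast
    then show ?thesis using False by (simp add: sum.distrib add_divide_distrib)
  qed simp
  have "Pop V E r (\<lambda>T. h T + c) S = (\<Sum>v\<in>V. fitness r S v / total_fitness V r S *
          ((if out_nbrs E v = {} then h S
           else (\<Sum>w\<in>out_nbrs E v. h (moran_step S v w)) / real (card (out_nbrs E v))) + c))"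
    unfolding Pop_def using inner by presburger
  also have "\<dots> = Pop V E r h S + c * (\<Sum>v\<in>V. fitness r S v / total_fitness V r S)"
    unfolding Pop_def by (simp add: distrib_left sum.distrib sum_distrib_left mult.commute)
  also have "\<dots> = Pop V E r h S + c" using sum_a[OF S] by simp
  finally show ?thesis .
qed

lemma Pop_mono: assumes S: "S \<subseteq> V" "S \<noteq> {}" and le: "\<And>T. T \<subseteq> V \<Longrightarrow> h1 T \<le> h2 T"
  shows "Pop V E r h1 S \<le> Pop V E r h2 S"
  unfolding Pop_def
proof (rule sum_mono, rule mult_left_mono)
  fix v assume "v \<in> V"
  show "(if out_nbrs E v = {} then h1 S
           else (\<Sum>w\<in>out_nbrs E v. h1 (moran_step S v w)) / real (card (out_nbrs E v)))
       \<le> (if out_nbrs E v = {} then h2 S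
           else (\<Sum>w\<in>out_nbrs E v. h2 (moran_step S v w)) / real (card (out_nbrs E v)))"
    using le S step_sub by (auto intro!: divide_right_mono sum_mono)
  show "0 \<le> fitness r S v / total_fitness V r S" using a_nonneg S by blast
qed

lemma Pop_const: assumes S: "S \<subseteq> V" "S \<noteq> {}" shows "Pop V E r (\<lambda>T. c) S = c"
proof -
  have "Pop V E r (\<lambda>T. 0) S = 0" unfolding Pop_def by (intro sum.neutral) simp
  then show ?thesis using Pop_add[OF S, of "\<lambda>T. 0" c] by simp
qed

lemma ext_bounds: "S \<subseteq> V \<Longrightarrow> 0 \<le> ext_within V E r t S \<and> ext_within V E r t S \<le> 1"
proof (induction t arbitrary: S)
  case 0 then show ?case by simp
next
  case (Suc t)
  show ?case
  proof (cases "S = {}")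
    case False
    have "Pop V E r (\<lambda>T. 0) S \<le> Pop V E r (ext_within V E r t) S"
      by (rule Pop_mono) (use Suc False in auto)
    moreover have "Pop V E r (ext_within V E r t) S \<le> Pop V E r (\<lambda>T. 1) S"
      by (rule Pop_mono) (use Suc False in auto)
    ultimately show ?thesis using Pop_const[OF Suc.prems False] False by (simp only: ext_Suc if_False)
  qed simp
qed

lemma ext_ge: assumes S: "S \<subseteq> V" and "ext_within V E r t S \<ge> a"
  shows "extinction_prob V E r S \<ge> a"
proof -
  have bdd: "bdd_above (range (\<lambda>t. ext_within V E r t S))"
    using ext_bounds[OF S] by (auto intro!: bdd_aboveI[of _ 1])
  show ?thesis unfolding extinction_prob_def
    using cSUP_upper[OF _ bdd, of t] assms(2) by simp
qed

lemma ext_nonneg: "S \<subseteq> V \<Longrightarrow> extinction_prob V E r S \<ge> 0"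
  using ext_ge[of S 0 0] ext_bounds[of S 0] by blast

lemma lower_bound:
  assumes fle: "\<And>S. S \<subseteq> V \<Longrightarrow> f S \<le> 1"
    and strict: "\<And>S. S \<subseteq> V \<Longrightarrow> S \<noteq> {} \<Longrightarrow> f S > 0 \<Longrightarrow> Pop V E r f S > f S"
    and S0: "S0 \<subseteq> V"
  shows "extinction_prob V E r S0 \<ge> f S0"
proof -
  define A where "A = {S. S \<subseteq> V \<and> S \<noteq> {} \<and> f S > 0}"
  have finA: "finite A" unfolding A_def using finV
    by (rule finite_subset[rotated, OF finite_Pow_iff[THEN iffD2]]) auto
  define \<mu> where "\<mu> = (if A = {} then 1 else Min ((\<lambda>S. Pop V E r f S - f S) ` A))"
  have mu_pos: "\<mu> > 0"
  proof (cases "A = {}")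
    case False
    then show ?thesis unfolding \<mu>_def using finA strict by (auto simp: A_def)
  qed (simp add: \<mu>_def)
  have mu_le: "Pop V E r f S - f S \<ge> \<mu>" if "S \<in> A" for S
    using that finA unfolding \<mu>_def by auto
  define lam where "lam = max (1/2) (1 - \<mu>)"
  have l0: "0 \<le> lam" "lam < 1" "1 - lam \<le> \<mu>" using mu_pos by (auto simp: lam_def)
  have main: "S \<subseteq> V \<Longrightarrow> ext_within V E r t S \<ge> f S - lam ^ t" for t S
  proof (induction t arbitrary: S)
    case 0
    then show ?case using fle[OF 0] by (cases "S = {}") auto
  next
    case (Suc t)
    show ?case
    proof (cases "S = {}")
      case True
      have "0 \<le> lam ^ Suc t" using l0 by simp
      then show ?thesis using fle[OF Suc.prems] True by (simp add: ext_Suc)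
    next
      case False
      show ?thesis
      proof (cases "f S > 0")
        case True
        have "S \<in> A" using True False Suc.prems by (auto simp: A_def)
        have "Pop V E r (\<lambda>T. f T + (- (lam ^ t))) S \<le> Pop V E r (ext_within V E r t) S"
          by (rule Pop_mono) (use Suc False in auto)
        then have "Pop V E r f S - lam^t \<le> ext_within V E r (Suc t) S"
        proof -
          have e: "ext_within V E r (Suc t) S = Pop V E r (ext_within V E r t) S"
            using False by (subst ext_Suc) simp
          have "Pop V E r (\<lambda>T. f T + (- (lam ^ t))) S = Pop V E r f S - lam ^ t"
            using Pop_add[OF Suc.prems False, of f "- (lam ^ t)"] by simp
          then show ?thesis using e \<open>Pop V E r (\<lambda>T. f T + (- (lam ^ t))) S \<le> _\<close> by simp
        qed
        moreover have "lam^t * (1 - lam) \<le> \<mu>"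
        proof -
          have "lam^t \<le> 1" using l0 by (simp add: power_le_one)
          then have "lam^t * (1 - lam) \<le> 1 * (1 - lam)" using l0 by (intro mult_right_mono) auto
          then have "lam^t * (1 - lam) \<le> 1 - lam" by simp
          then show ?thesis using l0(3) by (rule order.trans)
        qed
        ultimately show ?thesis using mu_le[OF \<open>S \<in> A\<close>] by (simp add: algebra_simps)
      next
        case False2: False
        have "0 \<le> lam^Suc t" using l0 by simp
        then show ?thesis using ext_bounds[OF Suc.prems, of "Suc t"] False2 by linarith
      qed
    qed
  qed
  show ?thesis
  proof (rule ccontr)
    assume "\<not> ?thesis"
    then have "f S0 - extinction_prob V E r S0 > 0" by simp
    then obtain t where t: "lam^t < f S0 - extinction_prob V E r S0"
      using real_arch_pow_inv l0 by (metis less_eq_real_def order.strict_trans2 zero_less_power linorder_not_le power_0 zero_less_one)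
    have "extinction_prob V E r S0 \<ge> f S0 - lam^t"
      by (rule ext_ge[OF S0]) (use main S0 in auto)
    then show False using t by simp
  qed
qed

end


definition qq :: "('v \<Rightarrow> real) \<Rightarrow> 'v \<Rightarrow> real" where "qq c x = 1 / (1 + c x)"
definition gp :: "('v \<Rightarrow> real) \<Rightarrow> 'v set \<Rightarrow> real" where "gp c S = (\<Prod>x\<in>S. qq c x)"

context gsetting
begin

definition Tt :: "('v \<Rightarrow> real) \<Rightarrow> 'v set \<Rightarrow> 'v \<Rightarrow> 'v \<Rightarrow> real" where
  "Tt c S v w = (if v \<in> S then (if w \<notin> S then r * (qq c w - 1) else 0) else (if w \<in> S then c w else 0))"

definition Phi :: "('v \<Rightarrow> real) \<Rightarrow> 'v set \<Rightarrow> real" where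
  "Phi c S = (\<Sum>v\<in>V. (\<Sum>w\<in>out_nbrs E v. Tt c S v w) / real (card (out_nbrs E v)))"

lemma qq_pos: "c x \<ge> 0 \<Longrightarrow> qq c x > 0" by (simp add: qq_def)
lemma qq_le1: "c x \<ge> 0 \<Longrightarrow> qq c x \<le> 1" by (simp add: qq_def)

lemma gp_pos: "S \<subseteq> V \<Longrightarrow> \<forall>x\<in>V. c x \<ge> 0 \<Longrightarrow> gp c S > 0"
  unfolding gp_def by (rule prod_pos) (auto intro: qq_pos)

lemma gp_le1: "S \<subseteq> V \<Longrightarrow> \<forall>x\<in>V. c x \<ge> 0 \<Longrightarrow> gp c S \<le> 1"
  unfolding gp_def by (rule prod_le_1) (auto intro: qq_pos[THEN less_imp_le] qq_le1)

lemma step_eq: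
  assumes S: "S \<subseteq> V" and c: "\<forall>x\<in>V. c x \<ge> 0" and w: "w \<in> V"
  shows "fitness r S v * gp c (moran_step S v w) = fitness r S v * gp c S + gp c S * Tt c S v w"
proof -
  have finS: "finite S" using S finV finite_subset by blast
  show ?thesis
  proof (cases "v \<in> S")
    case True
    show ?thesis
    proof (cases "w \<in> S")
      case False
      have "gp c (insert w S) = qq c w * gp c S" unfolding gp_def using finS False by simp
      then show ?thesis using True False
        by (simp add: moran_step_def fitness_def Tt_def algebra_simps)
    qed (use True in \<open>simp add: moran_step_def fitness_def Tt_def insert_absorb\<close>)
  next
    case False
    show ?thesis
    proof (cases "w \<in> S")
      case True
      have ne: "qq c w \<noteq> 0" using qq_pos[of c w] c w by auto
      have "gp c (S - {w}) = gp c S / qq c w" unfolding gp_def using finS True ne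
        by (simp add: prod_diff1)
      also have "\<dots> = gp c S * (1 + c w)" using c w by (simp add: qq_def)
      finally show ?thesis using True False
        by (simp add: moran_step_def fitness_def Tt_def algebra_simps)
    qed (use False in \<open>simp add: moran_step_def fitness_def Tt_def\<close>)
  qed
qed

lemma Pop_gp:
  assumes S: "S \<subseteq> V" "S \<noteq> {}" and c: "\<forall>x\<in>V. c x \<ge> 0" and ne: "\<forall>v\<in>V. out_nbrs E v \<noteq> {}"
  shows "Pop V E r (gp c) S = gp c S + gp c S / total_fitness V r S * Phi c S"
proof -
  have each: "fitness r S v / total_fitness V r S *
          (if out_nbrs E v = {} then gp c S
           else (\<Sum>w\<in>out_nbrs E v. gp c (moran_step S v w)) / real (card (out_nbrs E v)))
       = fitness r S v / total_fitness V r S * gp c S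
         + gp c S / total_fitness V r S * ((\<Sum>w\<in>out_nbrs E v. Tt c S v w) / real (card (out_nbrs E v)))"
    if v: "v \<in> V" for v
  proof -
    let ?O = "out_nbrs E v"
    have oN: "?O \<noteq> {}" using ne v by auto
    have D: "real (card ?O) > 0" using oN out_fin card_gt_0_iff by auto
    have "fitness r S v * (\<Sum>w\<in>?O. gp c (moran_step S v w))
        = (\<Sum>w\<in>?O. fitness r S v * gp c S + gp c S * Tt c S v w)"
      unfolding sum_distrib_left using step_eq[OF S(1) c] out_sub by (intro sum.cong) auto
    also have "\<dots> = real (card ?O) * (fitness r S v * gp c S) + gp c S * (\<Sum>w\<in>?O. Tt c S v w)"
      by (simp add: sum.distrib sum_distrib_left)
    finally have X: "fitness r S v * (\<Sum>w\<in>?O. gp c (moran_step S v w))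
        = real (card ?O) * (fitness r S v * gp c S) + gp c S * (\<Sum>w\<in>?O. Tt c S v w)" .
    have "fitness r S v / total_fitness V r S * ((\<Sum>w\<in>?O. gp c (moran_step S v w)) / real (card ?O))
       = (fitness r S v * (\<Sum>w\<in>?O. gp c (moran_step S v w))) / (real (card ?O) * total_fitness V r S)"
      by simp
    also have "\<dots> = (real (card ?O) * (fitness r S v * gp c S) + gp c S * (\<Sum>w\<in>?O. Tt c S v w)) / (real (card ?O) * total_fitness V r S)"
      using X by simp
    also have "\<dots> = fitness r S v / total_fitness V r S * gp c S
         + gp c S / total_fitness V r S * ((\<Sum>w\<in>?O. Tt c S v w) / real (card ?O))"
      using D by (simp add: add_divide_distrib field_simps)
    finally show ?thesis using oN by simp
  qed
  have "Pop V E r (gp c) S = (\<Sum>v\<in>V. fitness r S v / total_fitness V r S * gp c S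
         + gp c S / total_fitness V r S * ((\<Sum>w\<in>out_nbrs E v. Tt c S v w) / real (card (out_nbrs E v))))"
    unfolding Pop_def using each by (intro sum.cong) auto
  also have "\<dots> = (\<Sum>v\<in>V. fitness r S v / total_fitness V r S) * gp c S + gp c S / total_fitness V r S * Phi c S"
    unfolding Phi_def by (simp add: sum.distrib sum_distrib_left sum_distrib_right)
  also have "\<dots> = gp c S + gp c S / total_fitness V r S * Phi c S" using sum_a[OF S] by simp
  finally show ?thesis .
qed

lemma prod_pot_bound:
  assumes c: "\<forall>x\<in>V. c x \<ge> 0" and ne: "\<forall>v\<in>V. out_nbrs E v \<noteq> {}" and eta: "\<eta> \<ge> 0"
    and region: "\<And>S. S \<subseteq> V \<Longrightarrow> S \<noteq> {} \<Longrightarrow> gp c S > \<eta> \<Longrightarrow> Phi c S > 0"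
    and S0: "S0 \<subseteq> V"
  shows "extinction_prob V E r S0 \<ge> gp c S0 - \<eta>"
proof (rule lower_bound[OF _ _ S0])
  fix S assume "S \<subseteq> V"
  then have "gp c S \<le> 1" using gp_le1 c by blast
  then show "gp c S - \<eta> \<le> 1" using eta by linarith
next
  fix S assume S: "S \<subseteq> V" "S \<noteq> {}" and pos: "gp c S - \<eta> > 0"
  have e1: "Pop V E r (\<lambda>T. gp c T - \<eta>) S = Pop V E r (gp c) S - \<eta>"
    using Pop_add[OF S, of "gp c" "- \<eta>"] by simp
  have "gp c S > \<eta>" using pos by simp
  then have "Phi c S > 0" using region[OF S] by blast
  then have "gp c S / total_fitness V r S * Phi c S > 0"
    using gp_pos[OF S(1) c] W_pos[OF S] by simp
  then show "Pop V E r (\<lambda>T. gp c T - \<eta>) S > gp c S - \<eta>"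
    unfolding e1 Pop_gp[OF S c ne] by linarith
qed

definition Kin :: "'v \<Rightarrow> real" where
  "Kin w = (\<Sum>v\<in>V. if w \<in> out_nbrs E v then 1 / real (card (out_nbrs E v)) else 0)"
definition Rb :: "('v \<Rightarrow> real) \<Rightarrow> 'v \<Rightarrow> real" where
  "Rb c v = (\<Sum>w\<in>out_nbrs E v. 1 - qq c w) / real (card (out_nbrs E v))"
definition Lf :: "('v \<Rightarrow> real) \<Rightarrow> 'v set \<Rightarrow> 'v \<Rightarrow> 'v \<Rightarrow> real" where
  "Lf c S v w = (if v \<in> S \<and> w \<in> S then max 0 (c w - r * (1 - qq c w)) else 0)"
definition Loss :: "('v \<Rightarrow> real) \<Rightarrow> 'v set \<Rightarrow> real" where
  "Loss c S = (\<Sum>v\<in>V. (\<Sum>w\<in>out_nbrs E v. Lf c S v w) / real (card (out_nbrs E v)))"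

lemma charge:
  assumes S: "S \<subseteq> V" and c: "\<forall>x\<in>V. c x \<ge> 0"
  shows "Phi c S \<ge> (\<Sum>w\<in>S. c w * Kin w - r * Rb c w) - Loss c S"
proof -
  define C where "C v w = (if w \<in> S then c w else 0) - (if v \<in> S then r * (1 - qq c w) else 0)" for v w
  have TC: "Tt c S v w \<ge> C v w - Lf c S v w" for v w
    unfolding Tt_def C_def Lf_def by (auto simp: algebra_simps)
  have step1: "(\<Sum>v\<in>V. (\<Sum>w\<in>out_nbrs E v. C v w - Lf c S v w) / real (card (out_nbrs E v))) \<le> Phi c S"
    unfolding Phi_def by (intro sum_mono divide_right_mono) (auto intro: TC)
  have pv: "(\<Sum>w\<in>out_nbrs E v. C v w - Lf c S v w) / real (card (out_nbrs E v))
     = (\<Sum>w\<in>out_nbrs E v. if w \<in> S then c w else 0) / real (card (out_nbrs E v))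
       - (if v \<in> S then r * Rb c v else 0) - (\<Sum>w\<in>out_nbrs E v. Lf c S v w) / real (card (out_nbrs E v))" for v
  proof -
    have "(\<Sum>w\<in>out_nbrs E v. C v w - Lf c S v w) = (\<Sum>w\<in>out_nbrs E v. if w \<in> S then c w else 0)
       - (\<Sum>w\<in>out_nbrs E v. if v \<in> S then r * (1 - qq c w) else 0) - (\<Sum>w\<in>out_nbrs E v. Lf c S v w)"
      unfolding C_def by (simp add: sum_subtractf)
    moreover have "(\<Sum>w\<in>out_nbrs E v. if v \<in> S then r * (1 - qq c w) else 0) / real (card (out_nbrs E v))
        = (if v \<in> S then r * Rb c v else 0)"
      unfolding Rb_def by (simp add: sum_distrib_left[symmetric])
    ultimately show ?thesis by (simp add: diff_divide_distrib)
  qed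
  have "(\<Sum>v\<in>V. (\<Sum>w\<in>out_nbrs E v. C v w - Lf c S v w) / real (card (out_nbrs E v)))
     = (\<Sum>v\<in>V. (\<Sum>w\<in>out_nbrs E v. if w \<in> S then c w else 0) / real (card (out_nbrs E v)))
      - (\<Sum>v\<in>V. if v \<in> S then r * Rb c v else 0) - Loss c S"
    unfolding Loss_def pv by (simp add: sum_subtractf)
  note step2 = this
  have step3: "(\<Sum>v\<in>V. if v \<in> S then r * Rb c v else 0) = (\<Sum>v\<in>S. r * Rb c v)"
    using S by (simp add: sum.inter_restrict[OF finV, symmetric] Int_absorb1)
  have step4: "(\<Sum>v\<in>V. (\<Sum>w\<in>out_nbrs E v. if w \<in> S then c w else 0) / real (card (out_nbrs E v)))
     = (\<Sum>w\<in>S. c w * Kin w)"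
  proof -
    have "(\<Sum>v\<in>V. (\<Sum>w\<in>out_nbrs E v. if w \<in> S then c w else 0) / real (card (out_nbrs E v)))
       = (\<Sum>v\<in>V. \<Sum>w\<in>V. if w \<in> out_nbrs E v then (if w \<in> S then c w else 0) / real (card (out_nbrs E v)) else 0)"
    proof (intro sum.cong refl)
      fix v
      have "out_nbrs E v = V \<inter> out_nbrs E v" using out_sub by auto
      then have "(\<Sum>w\<in>out_nbrs E v. (if w \<in> S then c w else 0) / real (card (out_nbrs E v)))
          = (\<Sum>w\<in>V. if w \<in> out_nbrs E v then (if w \<in> S then c w else 0) / real (card (out_nbrs E v)) else 0)"
        using sum.inter_restrict[OF finV, of "\<lambda>w. (if w \<in> S then c w else 0) / real (card (out_nbrs E v))" "out_nbrs E v"]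
        by simp
      then show "(\<Sum>w\<in>out_nbrs E v. if w \<in> S then c w else 0) / real (card (out_nbrs E v))
          = (\<Sum>w\<in>V. if w \<in> out_nbrs E v then (if w \<in> S then c w else 0) / real (card (out_nbrs E v)) else 0)"
        by (simp add: sum_divide_distrib)
    qed
    also have "\<dots> = (\<Sum>w\<in>V. \<Sum>v\<in>V. if w \<in> out_nbrs E v then (if w \<in> S then c w else 0) / real (card (out_nbrs E v)) else 0)"
      by (rule sum.swap)
    also have "\<dots> = (\<Sum>w\<in>V. if w \<in> S then c w * Kin w else 0)"
      unfolding Kin_def by (intro sum.cong refl) (auto simp: sum_distrib_left intro!: sum.cong sum.neutral)
    also have "\<dots> = (\<Sum>w\<in>S. c w * Kin w)"
      using S by (simp add: sum.inter_restrict[OF finV, symmetric] Int_absorb1)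
    finally show ?thesis .
  qed
  show ?thesis using step1 unfolding step2 step3 step4 by (simp add: sum_subtractf)
qed

end


locale mf =
  fixes k l m :: nat
  assumes kpos: "k > 0" and lpos: "l > 0" and mpos: "m > 0"
begin

abbreviation "VV \<equiv> metafunnel_V k l m"
abbreviation "EE \<equiv> metafunnel_E k l m"

lemma mem_V: "(i,j,x) \<in> VV \<longleftrightarrow> (i = 0 \<and> j = 0 \<and> x = 0) \<or> (1 \<le> i \<and> i \<le> k \<and> 1 \<le> j \<and> j \<le> l \<and> x < m ^ i)"
  by (auto simp: metafunnel_V_def)

lemma vstar: "(0,0,0) \<in> VV" by (simp add: mem_V)

lemma fin_V: "finite VV"
proof -
  have "VV \<subseteq> {0..k} \<times> {0..l} \<times> {..<m^k}"
  proof
    fix v assume "v \<in> VV"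
    then obtain i j x where v: "v = (i,j,x)" and "(i,j,x) \<in> VV" by (cases v) auto
    then have "(i = 0 \<and> j = 0 \<and> x = 0) \<or> (1 \<le> i \<and> i \<le> k \<and> 1 \<le> j \<and> j \<le> l \<and> x < m ^ i)" by (simp add: mem_V)
    moreover have "i \<le> k \<Longrightarrow> m ^ i \<le> m ^ k" using mpos by (simp add: power_increasing)
    moreover have "0 < m ^ k" using mpos by simp
    ultimately show "v \<in> {0..k} \<times> {0..l} \<times> {..<m^k}" using v by auto
  qed
  then show ?thesis by (rule finite_subset) auto
qed

lemma mem_E: "((i,j,x),(i',j',x')) \<in> EE \<longleftrightarrow> (i,j,x) \<in> VV \<and> (i',j',x') \<in> VV \<and>
   ((i = 0 \<and> i' = k) \<or> (i = 1 \<and> i' = 0) \<or> (i = i' + 1 \<and> 1 \<le> i' \<and> j = j'))"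
  using kpos by (auto simp: metafunnel_E_def mem_V)

lemma EV: "EE \<subseteq> VV \<times> VV"
  using kpos vstar by (auto simp: metafunnel_E_def mem_V)

interpretation g: gsetting VV EE 2
  by unfold_locales (use fin_V EV in auto)

lemma mem_V': "v \<in> VV \<longleftrightarrow> v = (0,0,0) \<or> (1 \<le> fst v \<and> fst v \<le> k \<and> 1 \<le> fst (snd v) \<and> fst (snd v) \<le> l \<and> snd (snd v) < m ^ fst v)"
  by (cases v) (auto simp: mem_V)

definition ol :: "nat \<Rightarrow> nat" where "ol i = (if i = 0 then k else i - 1)"

lemma out_char: assumes v: "v \<in> VV"
  shows "out_nbrs EE v = {w \<in> VV. if fst v = 0 then fst w = k else if fst v = 1 then fst w = 0
        else fst w = fst v - 1 \<and> fst (snd w) = fst (snd v)}"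
proof -
  obtain i j x where vv: "v = (i,j,x)" by (cases v)
  show ?thesis unfolding out_nbrs_def vv
  proof (intro set_eqI iffI)
    fix w assume "w \<in> {w. ((i, j, x), w) \<in> EE}"
    then show "w \<in> {w \<in> VV. if fst (i,j,x) = 0 then fst w = k else if fst (i,j,x) = 1 then fst w = 0
        else fst w = fst (i,j,x) - 1 \<and> fst (snd w) = fst (snd (i,j,x))}"
      by (cases w) (auto simp: mem_E)
  next
    fix w assume w: "w \<in> {w \<in> VV. if fst (i,j,x) = 0 then fst w = k else if fst (i,j,x) = 1 then fst w = 0
        else fst w = fst (i,j,x) - 1 \<and> fst (snd w) = fst (snd (i,j,x))}"
    obtain i' j' x' where ww: "w = (i',j',x')" by (cases w)
    have "(i,j,x) \<in> VV" using v vv by simp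
    then show "w \<in> {w. ((i, j, x), w) \<in> EE}" using w unfolding ww
      by (auto simp: mem_E mem_V split: if_splits)
  qed
qed

lemma lay_eq: assumes "1 \<le> i" "i \<le> k"
  shows "{w \<in> VV. fst w = i} = (\<lambda>(j,x). (i,j,x)) ` ({1..l} \<times> {..<m^i})"
  using assms by (auto simp: mem_V' image_iff)

lemma card_lay: assumes "1 \<le> i" "i \<le> k" shows "card {w \<in> VV. fst w = i} = l * m ^ i"
proof -
  have "inj_on (\<lambda>(j,x). (i::nat,j::nat,x::nat)) ({1..l} \<times> {..<m^i})" by (auto simp: inj_on_def)
  then show ?thesis unfolding lay_eq[OF assms] by (simp add: card_image card_cartesian_product)
qed

lemma layj_eq: assumes "1 \<le> i" "i \<le> k" "1 \<le> j" "j \<le> l"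
  shows "{w \<in> VV. fst w = i \<and> fst (snd w) = j} = (\<lambda>x. (i,j,x)) ` {..<m^i}"
  using assms by (auto simp: mem_V' image_iff)

lemma card_layj: assumes "1 \<le> i" "i \<le> k" "1 \<le> j" "j \<le> l"
  shows "card {w \<in> VV. fst w = i \<and> fst (snd w) = j} = m ^ i"
proof -
  have "inj_on (\<lambda>x. (i::nat,j::nat,x::nat)) {..<m^i}" by (auto simp: inj_on_def)
  then show ?thesis unfolding layj_eq[OF assms] by (simp add: card_image)
qed

lemma lay0: "{w \<in> VV. fst w = 0} = {(0,0,0)}"
  by (auto simp: mem_V')

lemma V_cases: assumes "v \<in> VV"
  obtains "v = (0,0,0)" | "1 \<le> fst v" "fst v \<le> k" "1 \<le> fst (snd v)" "fst (snd v) \<le> l" "snd (snd v) < m ^ fst v"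
  using assms mem_V' by blast

definition D :: "nat \<times> nat \<times> nat \<Rightarrow> nat" where "D v = (if fst v = 0 then l * m ^ k else m ^ (fst v - 1))"

lemma card_out: assumes v: "v \<in> VV" shows "card (out_nbrs EE v) = D v"
proof (cases rule: V_cases[OF v])
  case 1
  then show ?thesis using out_char[OF v] card_lay[of k] kpos by (simp add: D_def)
next
  case 2
  show ?thesis
  proof (cases "fst v = 1")
    case True
    then show ?thesis using out_char[OF v] lay0 by (simp add: D_def)
  next
    case False
    then have "out_nbrs EE v = {w \<in> VV. fst w = fst v - 1 \<and> fst (snd w) = fst (snd v)}"
      using out_char[OF v] 2 by simp
    then show ?thesis using card_layj[of "fst v - 1" "fst (snd v)"] 2 False by (simp add: D_def)
  qed
qed

lemma D_pos: "D v > 0" using lpos mpos by (simp add: D_def)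

lemma out_ne: "v \<in> VV \<Longrightarrow> out_nbrs EE v \<noteq> {}"
  using card_out D_pos by (metis card.empty less_irrefl)

lemma out_layer: assumes v: "v \<in> VV" and w: "w \<in> out_nbrs EE v" shows "fst w = ol (fst v)"
  using w unfolding out_char[OF v] ol_def by (auto split: if_splits)

lemma out_V: "w \<in> out_nbrs EE v \<Longrightarrow> w \<in> VV"
  using g.out_sub by blast

lemma out_j: assumes v: "v \<in> VV" and w: "w \<in> out_nbrs EE v" and "fst v \<ge> 2"
  shows "fst (snd w) = fst (snd v)"
  using w assms(3) unfolding out_char[OF v] by (auto split: if_splits)

lemma in_set: assumes w: "w \<in> VV"
  shows "{v \<in> VV. w \<in> out_nbrs EE v} = (if fst w = 0 then {v \<in> VV. fst v = 1}
     else if fst w < k then {v \<in> VV. fst v = fst w + 1 \<and> fst (snd v) = fst (snd w)}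
     else {(0,0,0)})"
proof (cases rule: V_cases[OF w])
  case 1
  show ?thesis
  proof (intro set_eqI iffI)
    fix v assume "v \<in> {v \<in> VV. w \<in> out_nbrs EE v}"
    then show "v \<in> (if fst w = 0 then {v \<in> VV. fst v = 1}
     else if fst w < k then {v \<in> VV. fst v = fst w + 1 \<and> fst (snd v) = fst (snd w)}
     else {(0,0,0)})" using 1 kpos by (auto simp: out_char split: if_splits)
  next
    fix v assume "v \<in> (if fst w = 0 then {v \<in> VV. fst v = 1}
     else if fst w < k then {v \<in> VV. fst v = fst w + 1 \<and> fst (snd v) = fst (snd w)}
     else {(0,0,0)})"
    then show "v \<in> {v \<in> VV. w \<in> out_nbrs EE v}" using 1 w by (auto simp: out_char)
  qed
next
  case 2
  show ?thesis
  proof (intro set_eqI iffI)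
    fix v assume "v \<in> {v \<in> VV. w \<in> out_nbrs EE v}"
    then have v: "v \<in> VV" and wo: "w \<in> out_nbrs EE v" by auto
    have L: "fst w = ol (fst v)" by (rule out_layer[OF v wo])
    show "v \<in> (if fst w = 0 then {v \<in> VV. fst v = 1}
     else if fst w < k then {v \<in> VV. fst v = fst w + 1 \<and> fst (snd v) = fst (snd w)}
     else {(0,0,0)})"
    proof (cases rule: V_cases[OF v])
      case 1 then show ?thesis using L 2 by (simp add: ol_def)
    next
      case v2: 2
      then have "fst v \<ge> 2" using L 2 by (auto simp: ol_def)
      then show ?thesis using L 2 v2 v out_j[OF v wo] by (auto simp: ol_def)
    qed
  next
    fix v assume "v \<in> (if fst w = 0 then {v \<in> VV. fst v = 1}
     else if fst w < k then {v \<in> VV. fst v = fst w + 1 \<and> fst (snd v) = fst (snd w)}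
     else {(0,0,0)})"
    then show "v \<in> {v \<in> VV. w \<in> out_nbrs EE v}" using 2 w vstar
      by (auto simp: out_char split: if_splits)
  qed
qed

lemma Kin_eq: assumes w: "w \<in> VV"
  shows "g.Kin w = (if fst w = 0 then real l * real m else if fst w < k then real m else 1 / (real l * real m ^ k))"
proof -
  have "g.Kin w = (\<Sum>v\<in>{v \<in> VV. w \<in> out_nbrs EE v}. 1 / real (card (out_nbrs EE v)))"
    unfolding g.Kin_def by (rule sum.inter_filter[OF fin_V, symmetric])
  also have "\<dots> = (\<Sum>v\<in>{v \<in> VV. w \<in> out_nbrs EE v}. 1 / real (D v))"
    by (intro sum.cong refl) (simp add: card_out)
  finally have K: "g.Kin w = (\<Sum>v\<in>{v \<in> VV. w \<in> out_nbrs EE v}. 1 / real (D v))" .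
  show ?thesis
  proof (cases "fst w = 0")
    case True
    have "g.Kin w = (\<Sum>v\<in>{v \<in> VV. fst v = 1}. 1 / real (D v))" using K in_set[OF w] True by simp
    also have "\<dots> = (\<Sum>v\<in>{v \<in> VV. fst v = 1}. 1)" by (intro sum.cong refl) (simp add: D_def)
    also have "\<dots> = real l * real m" using card_lay[of 1] kpos by simp
    finally show ?thesis using True by simp
  next
    case F0: False
    show ?thesis
    proof (cases "fst w < k")
      case True
      have j: "1 \<le> fst (snd w)" "fst (snd w) \<le> l" using F0 w by (auto elim: V_cases)
      have "g.Kin w = (\<Sum>v\<in>{v \<in> VV. fst v = fst w + 1 \<and> fst (snd v) = fst (snd w)}. 1 / real (D v))"
        using K in_set[OF w] True F0 by simp
      also have "\<dots> = (\<Sum>v\<in>{v \<in> VV. fst v = fst w + 1 \<and> fst (snd v) = fst (snd w)}. 1 / real m ^ fst w)"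
        by (intro sum.cong refl) (simp add: D_def)
      also have "\<dots> = real m ^ (fst w + 1) / real m ^ fst w"
        using card_layj[of "fst w + 1" "fst (snd w)"] True j by simp
      also have "\<dots> = real m" using mpos by simp
      finally show ?thesis using True F0 by simp
    next
      case False
      have "g.Kin w = 1 / real (D (0,0,0))" using K in_set[OF w] False F0 by simp
      then show ?thesis using False F0 by (simp add: D_def)
    qed
  qed
qed

lemma Rb_eq: assumes v: "v \<in> VV"
  shows "g.Rb (\<lambda>w. cl (fst w)) v = 1 - 1 / (1 + cl (ol (fst v)))"
proof -
  have "g.Rb (\<lambda>w. cl (fst w)) v = (\<Sum>w\<in>out_nbrs EE v. 1 - 1 / (1 + cl (ol (fst v)))) / real (card (out_nbrs EE v))"
    unfolding g.Rb_def qq_def by (intro arg_cong2[where f="(/)"] sum.cong refl) (simp add: out_layer[OF v])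
  also have "\<dots> = 1 - 1 / (1 + cl (ol (fst v)))"
    using card_out[OF v] D_pos by simp
  finally show ?thesis .
qed

lemma prod_sub_le: fixes f :: "'a \<Rightarrow> real"
  assumes "finite S" "B \<subseteq> S" "\<forall>x\<in>S. 0 \<le> f x \<and> f x \<le> 1"
  shows "prod f S \<le> prod f B"
proof -
  have "prod f S = prod f (S - B) * prod f B" using prod.subset_diff[OF assms(2,1)] by simp
  moreover have "prod f (S - B) \<le> 1" using assms by (intro prod_le_1) auto
  moreover have "prod f B \<ge> 0" using assms by (intro prod_nonneg) auto
  moreover have "prod f (S - B) \<ge> 0" using assms by (intro prod_nonneg) auto
  ultimately show ?thesis using mult_left_le_one_le by metis
qed

lemma no_loop: assumes v: "v \<in> VV" shows "v \<notin> out_nbrs EE v"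
proof
  assume "v \<in> out_nbrs EE v"
  then have "fst v = ol (fst v)" using out_layer[OF v] by blast
  then show False using kpos by (cases "fst v = 0") (auto simp: ol_def)
qed

lemma fst_le: "v \<in> VV \<Longrightarrow> fst v \<le> k"
  by (auto elim: V_cases)

definition clB :: "nat \<Rightarrow> real" where "clB i = (if i = k then 15 else 3)"

lemma caseB_region: assumes S: "S \<subseteq> VV" "S \<noteq> {}" and gS: "gp (\<lambda>w. clB (fst w)) S > 1/16"
  shows "g.Phi (\<lambda>w. clB (fst w)) S > 0"
proof -
  let ?c = "\<lambda>w. clB (fst w)"
  have finS: "finite S" using S fin_V finite_subset by blast
  have q01: "\<forall>x\<in>S. 0 \<le> qq ?c x \<and> qq ?c x \<le> 1" by (auto simp: qq_def clB_def)
  obtain x where x: "x \<in> S" using S by blast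
  have Sx: "S = {x}"
  proof (rule ccontr)
    assume "S \<noteq> {x}"
    then obtain y where y: "y \<in> S" "y \<noteq> x" using x by blast
    have "gp ?c S \<le> qq ?c x * qq ?c y"
      unfolding gp_def using prod_sub_le[OF finS _ q01, of "{x,y}"] x y by simp
    also have "\<dots> \<le> 1/4 * (1/4)" by (intro mult_mono) (auto simp: qq_def clB_def)
    finally show False using gS by simp
  qed
  have xk: "fst x \<noteq> k"
  proof
    assume "fst x = k"
    then have "gp ?c S = 1/16" using Sx by (simp add: gp_def qq_def clB_def)
    then show False using gS by simp
  qed
  have xV: "x \<in> VV" using S x by auto
  have c0: "\<forall>x\<in>VV. ?c x \<ge> 0" by (simp add: clB_def)
  have loss: "g.Loss ?c S = 0"
    unfolding g.Loss_def
  proof (intro sum.neutral ballI)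
    fix v assume v: "v \<in> VV"
    have "g.Lf ?c S v w = 0" if "w \<in> out_nbrs EE v" for w
      using that no_loop[OF v] Sx by (auto simp: g.Lf_def)
    then show "(\<Sum>w\<in>out_nbrs EE v. g.Lf ?c S v w) / real (card (out_nbrs EE v)) = 0" by simp
  qed
  have lm1: "1 \<le> real l * real m" using lpos mpos
    by (metis One_nat_def Suc_leI of_nat_1 of_nat_mono of_nat_mult nat_0_less_mult_iff)
  have K1: "g.Kin x \<ge> 1" using Kin_eq[OF xV] xk lpos mpos fst_le[OF xV] lm1
    by auto
  have A: "g.Phi ?c S \<ge> (\<Sum>w\<in>S. ?c w * g.Kin w - 2 * g.Rb ?c w) - g.Loss ?c S"
    by (rule g.charge[OF S(1) c0])
  have B: "(\<Sum>w\<in>S. ?c w * g.Kin w - 2 * g.Rb ?c w) - g.Loss ?c S = 3 * g.Kin x - 2 * g.Rb ?c x"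
    using Sx xk loss by (simp add: clB_def)
  have "g.Rb ?c x \<le> 1" using Rb_eq[OF xV, of clB] by (simp add: clB_def)
  then show ?thesis using A B K1 by linarith
qed

lemma caseB_bound: assumes v: "v \<in> VV" "fst v \<noteq> k"
  shows "extinction_prob VV EE 2 {v} \<ge> 3/16"
proof -
  have "extinction_prob VV EE 2 {v} \<ge> gp (\<lambda>w. clB (fst w)) {v} - 1/16"
    by (rule g.prod_pot_bound) (use v caseB_region out_ne in \<open>auto simp: clB_def\<close>)
  then show ?thesis using v by (simp add: gp_def qq_def clB_def)
qed

definition clA :: "nat \<Rightarrow> real" where
  "clA i = (if i = k then 4 ^ (k+1) else 4 ^ (i+1) / (real l * real m ^ (i+1)))"

lemma clA_nonneg: "clA i \<ge> 0" by (simp add: clA_def)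

lemma one_minus_q: "c \<ge> 0 \<Longrightarrow> 1 - 1 / (1 + c) \<le> (c::real)"
  by (simp add: field_simps)

context
  assumes hA1: "\<forall>i<k. (4::real) ^ (i+1) \<le> real l * real m ^ (i+1)"
    and hA2: "(4::real) ^ (k+1) \<le> 2 * real l * real m ^ k"
begin

lemma clA_le1: "i < k \<Longrightarrow> clA i \<le> 1"
  using hA1 lpos mpos by (simp add: clA_def divide_le_eq)

definition sl :: "nat \<times> nat \<times> nat \<Rightarrow> real" where
  "sl v = clA (fst v) * g.Kin v - 2 * (1 - 1 / (1 + clA (ol (fst v))))"

lemma sl_star: "sl (0,0,0) > 2"
proof -
  have "clA 0 * g.Kin (0,0,0) = 4" using Kin_eq[OF vstar] kpos lpos mpos by (simp add: clA_def)
  moreover have "1 / (1 + clA (ol 0)) > 0" using clA_nonneg[of "ol 0"] by simp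
  ultimately show ?thesis unfolding sl_def by simp
qed

lemma sl_pos: assumes v: "v \<in> VV" shows "sl v > 0"
proof (cases rule: V_cases[OF v])
  case 1 then show ?thesis using sl_star by simp
next
  case 2
  define i where "i = fst v"
  have i: "1 \<le> i" "i \<le> k" using 2 by (auto simp: i_def)
  have lm: "real l * real m ^ i > 0" using lpos mpos by simp
  have a: "clA i * g.Kin v = 4 ^ (i+1) / (real l * real m ^ i)"
  proof (cases "i < k")
    case True
    then have "clA i * g.Kin v = 4 ^ (i+1) / (real l * real m ^ (i+1)) * real m"
      using Kin_eq[OF v] i by (simp add: clA_def i_def)
    then show ?thesis using mpos by (simp add: field_simps)
  next
    case False
    then have "i = k" using i by simp
    then show ?thesis using Kin_eq[OF v] i kpos by (simp add: clA_def i_def)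
  qed
  have ol: "ol i = i - 1" "i - 1 < k" using i by (auto simp: ol_def)
  have b: "clA (ol i) = 4 ^ i / (real l * real m ^ i)"
    using ol i by (simp add: clA_def)
  have "1 - 1 / (1 + clA (ol i)) \<le> clA (ol i)" by (rule one_minus_q[OF clA_nonneg])
  then have "sl v \<ge> 4 ^ (i+1) / (real l * real m ^ i) - 2 * (4 ^ i / (real l * real m ^ i))"
    unfolding sl_def i_def[symmetric] a b by (intro diff_left_mono mult_left_mono) auto
  also have "4 ^ (i+1) / (real l * real m ^ i) - 2 * (4 ^ i / (real l * real m ^ i)) = 2 * 4 ^ i / (real l * real m ^ i)"
    by (simp add: field_simps)
  finally show ?thesis using lm by (smt (verit) divide_pos_pos zero_less_power)
qed

lemma lossA: assumes S: "S \<subseteq> VV" and uniq: "\<forall>a\<in>S. \<forall>b\<in>S. fst a = k \<longrightarrow> fst b = k \<longrightarrow> a = b"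
  shows "g.Loss (\<lambda>w. clA (fst w)) S \<le> (if (0,0,0) \<in> S then 4 ^ (k+1) / (real l * real m ^ k) else 0)"
proof -
  let ?c = "\<lambda>w. clA (fst w)"
  define Y where "Y v = (if v = (0,0,0) then (if (0,0,0) \<in> S then 4 ^ (k+1) / (real l * real m ^ k) else 0) else 0)" for v :: "nat \<times> nat \<times> nat"
  have Lf_le: "g.Lf ?c S v w \<le> (if v \<in> S \<and> w \<in> S \<and> fst w = k then 4 ^ (k+1) else 0)" for v w
  proof (cases "v \<in> S \<and> w \<in> S")
    case True
    show ?thesis
    proof (cases "fst w = k")
      case True
      have "qq ?c w \<le> 1" by (rule g.qq_le1) (rule clA_nonneg)
      then have "?c w - 2 * (1 - qq ?c w) \<le> ?c w" by simp
      then have "?c w - 2 * (1 - qq ?c w) \<le> 4 ^ (k+1)" using True by (simp add: clA_def)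
      then show ?thesis using True \<open>v \<in> S \<and> w \<in> S\<close> by (simp add: g.Lf_def)
    next
      case False
      have w: "w \<in> VV" using \<open>v \<in> S \<and> w \<in> S\<close> S by auto
      have lt: "fst w < k" using fst_le[OF w] False by simp
      have c1: "?c w \<le> 1" "?c w \<ge> 0" using clA_le1[OF lt] clA_nonneg by auto
      have "?c w - 2 * (1 - qq ?c w) = ?c w * (?c w - 1) / (1 + ?c w)"
        using c1 by (simp add: qq_def field_simps)
      also have "\<dots> \<le> 0" using c1 by (intro divide_nonpos_pos mult_nonneg_nonpos) auto
      finally show ?thesis using False by (simp add: g.Lf_def)
    qed
  next
    case False then show ?thesis by (auto simp: g.Lf_def)
  qed
  have X: "(\<Sum>w\<in>out_nbrs EE v. g.Lf ?c S v w) / real (card (out_nbrs EE v)) \<le> Y v" if v: "v \<in> VV" for v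
  proof (cases "v = (0,0,0)")
    case True
    have "(\<Sum>w\<in>out_nbrs EE v. g.Lf ?c S v w) \<le> (\<Sum>w\<in>out_nbrs EE v. if v \<in> S \<and> w \<in> S \<and> fst w = k then 4 ^ (k+1) else 0)"
      by (intro sum_mono Lf_le)
    also have "\<dots> = (if v \<in> S then 4 ^ (k+1) * real (card {w \<in> out_nbrs EE v. w \<in> S}) else 0)"
    proof -
      have "(\<Sum>w\<in>out_nbrs EE v. if v \<in> S \<and> w \<in> S \<and> fst w = k then (4::real) ^ (k+1) else 0)
          = (\<Sum>w\<in>out_nbrs EE v. if v \<in> S \<and> w \<in> S then 4 ^ (k+1) else 0)"
        using out_layer[OF v] True by (intro sum.cong refl) (simp add: ol_def)
      also have "\<dots> = (if v \<in> S then 4 ^ (k+1) * real (card {w \<in> out_nbrs EE v. w \<in> S}) else 0)"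
      proof (cases "v \<in> S")
        case True
        have "(\<Sum>w\<in>out_nbrs EE v. if w \<in> S then (4::real) ^ (k+1) else 0)
             = (\<Sum>w\<in>{w \<in> out_nbrs EE v. w \<in> S}. 4 ^ (k+1))"
          by (rule sum.inter_filter[OF g.out_fin, symmetric])
        then show ?thesis using True by simp
      qed simp
      finally show ?thesis .
    qed
    also have "\<dots> \<le> (if v \<in> S then 4 ^ (k+1) else 0)"
    proof -
      have "card {w \<in> out_nbrs EE v. w \<in> S} \<le> 1"
      proof -
        have fin: "finite {w \<in> out_nbrs EE v. w \<in> S}" using g.out_fin by simp
        have "\<forall>a\<in>{w \<in> out_nbrs EE v. w \<in> S}. \<forall>b\<in>{w \<in> out_nbrs EE v. w \<in> S}. a = b"
          using uniq out_layer[OF v] True by (auto simp: ol_def)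
        then show ?thesis using card_le_Suc0_iff_eq[OF fin] by simp
      qed
      then show ?thesis by simp
    qed
    finally have "(\<Sum>w\<in>out_nbrs EE v. g.Lf ?c S v w) \<le> (if v \<in> S then 4 ^ (k+1) else 0)" .
    moreover have "card (out_nbrs EE v) = l * m ^ k" using card_out[OF v] True by (simp add: D_def)
    ultimately show ?thesis using True lpos mpos by (auto simp: Y_def divide_right_mono divide_nonpos_pos)
  next
    case False
    have "g.Lf ?c S v w \<le> 0" if "w \<in> out_nbrs EE v" for w
    proof -
      have "fst w \<noteq> k" using out_layer[OF v that] False fst_le[OF v] v
        by (auto simp: ol_def mem_V' elim: V_cases)
      then show ?thesis using Lf_le[of v w] by simp
    qed
    then have "(\<Sum>w\<in>out_nbrs EE v. g.Lf ?c S v w) \<le> 0" by (intro sum_nonpos) auto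
    then show ?thesis using False by (simp add: Y_def divide_nonpos_nonneg)
  qed
  have "g.Loss ?c S \<le> (\<Sum>v\<in>VV. Y v)" unfolding g.Loss_def by (intro sum_mono X)
  also have "(\<Sum>v\<in>VV. Y v) = (if (0,0,0) \<in> S then 4 ^ (k+1) / (real l * real m ^ k) else 0)"
    unfolding Y_def using vstar by (simp add: sum.delta[OF fin_V])
  finally show ?thesis .
qed

lemma caseA_region: assumes S: "S \<subseteq> VV" "S \<noteq> {}"
  and gS: "gp (\<lambda>w. clA (fst w)) S > 1 / (1 + 4 ^ (k+1)) / 2"
  shows "g.Phi (\<lambda>w. clA (fst w)) S > 0"
proof -
  let ?c = "\<lambda>w. clA (fst w)"
  let ?qk = "1 / (1 + 4 ^ (k+1)) :: real"
  have finS: "finite S" using S fin_V finite_subset by blast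
  have q01: "\<forall>x\<in>S. 0 \<le> qq ?c x \<and> qq ?c x \<le> 1"
    using clA_nonneg g.qq_le1 g.qq_pos less_imp_le by metis
  have uniq: "\<forall>a\<in>S. \<forall>b\<in>S. fst a = k \<longrightarrow> fst b = k \<longrightarrow> a = b"
  proof (intro ballI impI, rule ccontr)
    fix a b assume ab: "a \<in> S" "b \<in> S" "fst a = k" "fst b = k" "a \<noteq> b"
    have "gp ?c S \<le> qq ?c a * qq ?c b"
      unfolding gp_def using prod_sub_le[OF finS _ q01, of "{a,b}"] ab by simp
    also have "\<dots> = ?qk * ?qk" using ab by (simp add: qq_def clA_def)
    also have "\<dots> \<le> ?qk * (1/2)"
    proof -
      have "(4::real) ^ (k+1) \<ge> 1" by (rule one_le_power) simp
      then have "?qk \<le> 1/2" by (simp add: field_simps)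
      then show ?thesis by (intro mult_left_mono) auto
    qed
    finally show False using gS by simp
  qed
  have c0: "\<forall>x\<in>VV. ?c x \<ge> 0" using clA_nonneg by simp
  have A: "g.Phi ?c S \<ge> (\<Sum>w\<in>S. ?c w * g.Kin w - 2 * g.Rb ?c w) - g.Loss ?c S"
    by (rule g.charge[OF S(1) c0])
  have B: "(\<Sum>w\<in>S. ?c w * g.Kin w - 2 * g.Rb ?c w) = (\<Sum>w\<in>S. sl w)"
    using S(1) by (intro sum.cong refl) (auto simp: sl_def Rb_eq)
  have L: "g.Loss ?c S \<le> (if (0,0,0) \<in> S then 4 ^ (k+1) / (real l * real m ^ k) else 0)"
    by (rule lossA[OF S(1) uniq])
  have b2: "4 ^ (k+1) / (real l * real m ^ k) \<le> 2"
    using hA2 lpos mpos by (simp add: divide_le_eq mult.assoc)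
  have slpos: "\<forall>w\<in>S. sl w > 0" using sl_pos S(1) by auto
  show ?thesis
  proof (cases "(0,0,0) \<in> S")
    case True
    have "sl (0,0,0) \<le> (\<Sum>w\<in>S. sl w)"
      using True slpos finS by (intro member_le_sum) auto
    then show ?thesis using A B L b2 sl_star True by simp
  next
    case False
    have "(\<Sum>w\<in>S. sl w) > 0" using slpos finS S(2) by (intro sum_pos) auto
    then show ?thesis using A B L False by simp
  qed
qed

lemma half_aux: "a - q / 2 \<le> e \<Longrightarrow> a = q \<Longrightarrow> q / 2 \<le> (e::real)"
  by linarith

lemma caseA_bound: assumes v: "v \<in> VV" "fst v = k"
  shows "extinction_prob VV EE 2 {v} \<ge> 1 / (1 + 4 ^ (k+1)) / 2"
proof -
  have "extinction_prob VV EE 2 {v} \<ge> gp (\<lambda>w. clA (fst w)) {v} - 1 / (1 + 4 ^ (k+1)) / 2"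
    by (rule g.prod_pot_bound) (use v caseA_region out_ne clA_nonneg in auto)
  moreover have "gp (\<lambda>w. clA (fst w)) {v} = 1 / (1 + 4 ^ (k+1))" using v by (simp add: gp_def qq_def clA_def)
  ultimately show ?thesis using half_aux by blast
qed

end

abbreviation "Lk \<equiv> {w \<in> VV. fst w = k}"
abbreviation "NL \<equiv> {w \<in> VV. fst w \<noteq> k}"

lemma card_split: "card VV = card Lk + card NL"
proof -
  have "VV = Lk \<union> NL" by auto
  moreover have "Lk \<inter> NL = {}" by auto
  ultimately show ?thesis using fin_V by (metis (no_types, lifting) card_Un_disjoint finite_Un)
qed

lemma card_Lk: "card Lk = l * m ^ k" using card_lay[of k] kpos by simp

lemma NL_ge: assumes "k \<ge> 2" shows "card NL \<ge> l * m ^ (k - 1)"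
proof -
  have "{w \<in> VV. fst w = k - 1} \<subseteq> NL" using assms by auto
  then have "card {w \<in> VV. fst w = k - 1} \<le> card NL" using fin_V by (intro card_mono) auto
  then show ?thesis using card_lay[of "k-1"] assms by simp
qed

lemma pow_gap: assumes "m \<ge> 2" "i < i'" "x < m ^ i"
  shows "m ^ i + x < m ^ i'"
proof -
  have "m ^ i + x < 2 * m ^ i" using assms by simp
  also have "\<dots> \<le> m * m ^ i" using assms by simp
  also have "\<dots> = m ^ (Suc i)" by simp
  also have "\<dots> \<le> m ^ i'" using assms by (intro power_increasing) auto
  finally show ?thesis .
qed

lemma NL_le: assumes m2: "m \<ge> 2" shows "card NL \<le> card Lk"
proof -
  define f where "f v = (if fst v = 0 then (k, 1, 0) else (k, fst (snd v), m ^ fst v + snd (snd v)))"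
    for v :: "nat \<times> nat \<times> nat"
  have inj: "inj_on f NL"
  proof (rule inj_onI)
    fix a b assume a: "a \<in> NL" and b: "b \<in> NL" and fab: "f a = f b"
    obtain i j x where aa: "a = (i,j,x)" by (cases a)
    obtain i' j' x' where bb: "b = (i',j',x')" by (cases b)
    have av: "a \<in> VV" "i \<noteq> k" and bv: "b \<in> VV" "i' \<noteq> k" using a b aa bb by auto
    show "a = b"
    proof (cases "i = 0")
      case True
      then have "a = (0,0,0)" using av aa by (auto simp: mem_V)
      moreover have "i' = 0"
      proof (rule ccontr)
        assume "i' \<noteq> 0"
        then have "m ^ i' + x' = 0" using fab True aa bb by (simp add: f_def)
        then show False using mpos by simp
      qed
      then have "b = (0,0,0)" using bv bb by (auto simp: mem_V)
      ultimately show ?thesis by simp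
    next
      case False
      have i'0: "i' \<noteq> 0"
      proof
        assume "i' = 0"
        then have "m ^ i + x = 0" using fab False aa bb by (simp add: f_def)
        then show False using mpos by simp
      qed
      have eq: "j = j'" "m ^ i + x = m ^ i' + x'" using fab False i'0 aa bb by (auto simp: f_def)
      have xl: "x < m ^ i" "x' < m ^ i'" using av bv aa bb False i'0 by (auto simp: mem_V)
      have "i = i'"
      proof (rule ccontr)
        assume "i \<noteq> i'"
        then consider "i < i'" | "i' < i" by linarith
        then show False
        proof cases
          case 1 then show False using pow_gap[OF m2 1 xl(1)] eq by simp
        next
          case 2 then show False using pow_gap[OF m2 2 xl(2)] eq by simp
        qed
      qed
      then show ?thesis using eq aa bb by simp
    qed
  qed
  have img: "f ` NL \<subseteq> Lk"
  proof
    fix y assume "y \<in> f ` NL"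
    then obtain a where a: "a \<in> NL" and y: "y = f a" by blast
    obtain i j x where aa: "a = (i,j,x)" by (cases a)
    have av: "(i,j,x) \<in> VV" "i \<noteq> k" using a aa by auto
    show "y \<in> Lk"
    proof (cases "i = 0")
      case True then show ?thesis using y aa kpos lpos mpos by (simp add: f_def mem_V)
    next
      case False
      then have c: "1 \<le> i" "i < k" "1 \<le> j" "j \<le> l" "x < m ^ i" using av by (auto simp: mem_V)
      then have "m ^ i + x < m ^ k" using pow_gap[OF m2] by blast
      then show ?thesis using y aa False c kpos by (simp add: f_def mem_V)
    qed
  qed
  show ?thesis using card_inj_on_le[OF inj img] fin_V by simp
qed

lemma NL_k1: assumes "k = 1" shows "card NL = 1"
proof -
  have "NL = {(0,0,0)}"
  proof (intro set_eqI iffI)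
    fix w assume w: "w \<in> NL"
    then have "w \<in> VV" "fst w \<noteq> 1" using assms by auto
    then show "w \<in> {(0,0,0)}" using assms by (cases rule: V_cases) auto
  qed (use vstar assms in auto)
  then show ?thesis by simp
qed

lemma sum_ext_ge: assumes "A \<subseteq> VV" and "\<And>v. v \<in> A \<Longrightarrow> extinction_prob VV EE 2 {v} \<ge> b"
  shows "(\<Sum>v\<in>VV. extinction_prob VV EE 2 {v}) \<ge> real (card A) * b"
proof -
  have "real (card A) * b = (\<Sum>v\<in>A. b)" by simp
  also have "\<dots> \<le> (\<Sum>v\<in>A. extinction_prob VV EE 2 {v})" using assms(2) by (intro sum_mono) auto
  also have "\<dots> \<le> (\<Sum>v\<in>VV. extinction_prob VV EE 2 {v})"
    using assms(1) fin_V g.ext_nonneg by (intro sum_mono2) auto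
  finally show ?thesis .
qed

lemma card_V_ge: "card VV \<ge> k" "card VV \<ge> l" "card VV \<ge> m"
proof -
  have le: "card Lk \<le> card VV" using fin_V by (intro card_mono) auto
  have mk: "m ^ k \<ge> m" using mpos kpos by (simp add: self_le_power)
  have "l * m ^ k \<ge> 1 * m ^ k" using lpos by (intro mult_right_mono) auto
  then have "l * m ^ k \<ge> m" using mk by linarith
  moreover have ll: "l * 1 \<le> l * m ^ k" using mpos by (intro mult_left_mono) auto
  ultimately show "card VV \<ge> m" using le card_Lk by linarith
  show "card VV \<ge> l" using le card_Lk ll by linarith
  have "(\<lambda>i. (i,1,0)) ` {1..k} \<subseteq> VV" using lpos mpos by (auto simp: mem_V)
  moreover have "card ((\<lambda>i. (i::nat,1::nat,0::nat)) ` {1..k}) = k" by (simp add: card_image inj_on_def)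
  ultimately show "card VV \<ge> k" using fin_V by (metis card_mono)
qed

lemma le_lmul: "(x::real) \<ge> 0 \<Longrightarrow> x \<le> real l * x"
  using mult_right_mono[of 1 "real l" x] lpos by simp

lemma avg_bound:
  fixes \<delta> :: real and M :: nat
  assumes dpos: "\<delta> > 0" and M8: "M \<ge> 8" and MP: "real M powr (\<delta>/2) \<ge> 4"
    and nbig: "real (card VV) powr (\<delta>/2) > 20 + 16 * (real M + 1)" and n9: "card VV \<ge> 9"
  shows "avg_extinction_prob VV EE 2 > real (card VV) powr (- \<delta>)"
proof -
  define n where "n = card VV"
  define P where "P = real n powr (\<delta>/2)"
  define Sx where "Sx = (\<Sum>v\<in>VV. extinction_prob VV EE 2 {v})"
  have avg: "avg_extinction_prob VV EE 2 = Sx / real n" unfolding avg_extinction_prob_def Sx_def n_def ..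
  have npos: "real n > 0" using n9 n_def by simp
  have PP: "real n powr \<delta> = P * P" unfolding P_def by (simp add: powr_add[symmetric])
  have Pbig: "P > 20 + 16 * (real M + 1)" using nbig by (simp add: P_def n_def)
  have rhs: "real n powr (- \<delta>) = 1 / (P * P)" by (simp add: powr_minus_divide PP)
  have Ppos: "P > 0" using Pbig by simp
  show ?thesis
  proof (cases "k = 1 \<or> m \<ge> M")
    case True
    have lm8: "k = 1 \<Longrightarrow> l * m \<ge> 8"
      using card_split card_Lk NL_k1 n9 by simp
    have hA1: "\<forall>i<k. (4::real) ^ (i+1) \<le> real l * real m ^ (i+1)"
    proof (intro allI impI)
      fix i assume i: "i < k"
      show "(4::real) ^ (i+1) \<le> real l * real m ^ (i+1)"
      proof (cases "k = 1")
        case True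
        then have "i = 0" using i by simp
        then show ?thesis using lm8 True by (simp add: of_nat_mult[symmetric] del: of_nat_mult)
      next
        case False
        then have "m \<ge> 4" using \<open>k = 1 \<or> m \<ge> M\<close> M8 by simp
        then have "(4::real) ^ (i+1) \<le> real m ^ (i+1)" by (intro power_mono) auto
        also have "\<dots> \<le> real l * real m ^ (i+1)" by (rule le_lmul) simp
        finally show ?thesis .
      qed
    qed
    have hA2: "(4::real) ^ (k+1) \<le> 2 * real l * real m ^ k"
    proof (cases "k = 1")
      case True
      then show ?thesis using lm8 by (simp add: of_nat_mult[symmetric] del: of_nat_mult)
    next
      case False
      then have m8: "m \<ge> 8" using \<open>k = 1 \<or> m \<ge> M\<close> M8 by simp
      have "(4::real) ^ (k+1) = 4 * 4 ^ k" by simp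
      also have "\<dots> \<le> 2 * (2 ^ k * 4 ^ k)"
      proof -
        have "(2::real) ^ 1 \<le> 2 ^ k" by (rule power_increasing) (use kpos in auto)
        then show ?thesis by simp
      qed
      also have "\<dots> = 2 * 8 ^ k" by (simp add: power_mult_distrib[symmetric])
      also have "\<dots> \<le> 2 * real m ^ k" using m8 by (simp add: power_mono)
      also have "\<dots> \<le> 2 * real l * real m ^ k" using le_lmul[of "2 * real m ^ k"] by simp
      finally show ?thesis .
    qed
    define Q where "Q = 1 / (1 + 4 ^ (k+1)) / (2::real)"
    have bnd: "Sx \<ge> real (card Lk) * Q"
      unfolding Sx_def
    proof (rule sum_ext_ge)
      fix v assume "v \<in> Lk"
      then show "extinction_prob VV EE 2 {v} \<ge> Q" unfolding Q_def using caseA_bound[OF hA1 hA2, of v] by blast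
    qed auto
    have n2: "real n \<le> 2 * real (card Lk)"
    proof (cases "k = 1")
      case True
      have "card Lk \<ge> 1" using card_Lk lpos mpos by simp
      then show ?thesis using card_split NL_k1[OF True] unfolding n_def by simp
    next
      case False
      then have "m \<ge> 2" using \<open>k = 1 \<or> m \<ge> M\<close> M8 by simp
      then show ?thesis using card_split NL_le unfolding n_def by simp
    qed
    have "(0::real) < 1 + 4 ^ (k+1)" by (simp add: add_pos_nonneg)
    then have Qpos: "Q > 0" unfolding Q_def by simp
    have "Sx / real n \<ge> real (card Lk) * Q / (2 * real (card Lk))"
    proof -
      have "Sx / real n \<ge> real (card Lk) * Q / real n" using bnd npos by (simp add: divide_right_mono)
      moreover have "real (card Lk) * Q / real n \<ge> real (card Lk) * Q / (2 * real (card Lk))"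
        using n2 npos Qpos by (intro divide_left_mono) auto
      ultimately show ?thesis by linarith
    qed
    moreover have "real (card Lk) > 0" using card_Lk lpos mpos by simp
    ultimately have low: "Sx / real n \<ge> Q / 2" by simp
    have k4: "(4::real) ^ k \<le> P"
    proof (cases "k = 1")
      case True then show ?thesis using Pbig by simp
    next
      case False
      then have mM: "m \<ge> M" using \<open>k = 1 \<or> m \<ge> M\<close> by simp
      have "real M ^ k \<le> real m ^ k" using mM by (simp add: power_mono)
      also have "\<dots> \<le> real l * real m ^ k" by (rule le_lmul) simp
      also have "\<dots> = real (card Lk)" using card_Lk by simp
      also have "\<dots> \<le> real n" using card_split unfolding n_def by simp
      finally have Mn: "real M ^ k \<le> real n" .
      have "(4::real) ^ k \<le> (real M powr (\<delta>/2)) ^ k" using MP by (intro power_mono) auto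
      also have "\<dots> = (real M ^ k) powr (\<delta>/2)"
        using M8 by (simp add: powr_power powr_realpow[symmetric] powr_powr mult.commute)
      also have "\<dots> \<le> real n powr (\<delta>/2)" using Mn dpos by (intro powr_mono2) auto
      finally show ?thesis unfolding P_def .
    qed
    have "Q / 2 = 1 / (4 + 16 * 4 ^ k)" unfolding Q_def by (simp add: field_simps)
    moreover have "4 + 16 * 4 ^ k < P * P"
    proof -
      have "(1::real) \<le> 4 ^ k" by simp
      then have "4 + 16 * 4 ^ k \<le> 20 * (4::real) ^ k" by simp
      also have "\<dots> \<le> 20 * P" using k4 by simp
      also have "\<dots> < P * P" using Pbig Ppos by (intro mult_strict_right_mono) auto
      finally show ?thesis .
    qed
    moreover have "(0::real) < 4 + 16 * 4 ^ k" by (simp add: add_pos_nonneg)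
    ultimately have "Q / 2 > 1 / (P * P)" using Ppos
      by (simp only:) (rule divide_strict_left_mono, auto)
    then have "1 / (P * P) < Sx / real n" using low by linarith
    then show ?thesis using avg rhs unfolding n_def[symmetric] by simp
  next
    case False
    then have k2: "k \<ge> 2" and mM: "m < M" using kpos by auto
    have bnd: "Sx \<ge> real (card NL) * (3/16)"
      unfolding Sx_def
    proof (rule sum_ext_ge)
      fix v assume "v \<in> NL"
      then show "extinction_prob VV EE 2 {v} \<ge> 3/16" using caseB_bound[of v] by blast
    qed auto
    have "card Lk \<le> M * card NL"
    proof -
      have "m ^ k = m * m ^ (k - 1)" using kpos by (cases k) auto
      then have "card Lk = m * (l * m ^ (k - 1))" using card_Lk by simp
      also have "\<dots> \<le> M * card NL" using mM NL_ge[OF k2] by (intro mult_mono) auto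
      finally show ?thesis .
    qed
    then have "n \<le> (M + 1) * card NL" using card_split unfolding n_def by (simp add: add_mult_distrib)
    then have "real n \<le> real ((M + 1) * card NL)" by (simp only: of_nat_le_iff)
    then have nle: "real n \<le> (real M + 1) * real (card NL)" by (simp add: algebra_simps)
    have "0 < l * m ^ (k - 1)" using lpos mpos by simp
    then have NLpos: "real (card NL) > 0" using NL_ge[OF k2] by linarith
    have "Sx / real n \<ge> real (card NL) * (3/16) / ((real M + 1) * real (card NL))"
    proof -
      have "Sx / real n \<ge> real (card NL) * (3/16) / real n"
        by (rule divide_right_mono[OF bnd]) (use npos in simp)
      moreover have "real (card NL) * (3/16) / real n \<ge> real (card NL) * (3/16) / ((real M + 1) * real (card NL))"
        using nle npos NLpos by (intro divide_left_mono) auto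
      ultimately show ?thesis by linarith
    qed
    then have low: "Sx / real n \<ge> 3 / (16 * (real M + 1))" using NLpos by simp
    have "16 * (real M + 1) / 3 < P * P"
    proof -
      have "16 * (real M + 1) / 3 \<le> 16 * (real M + 1)" by simp
      then have "16 * (real M + 1) / 3 \<le> P" using Pbig by linarith
      also have "P * 1 < P * P" using Pbig Ppos by (intro mult_strict_left_mono) auto
      then have "P < P * P" by simp
      finally show ?thesis .
    qed
    then have "1 / (16 * (real M + 1) / 3) > 1 / (P * P)" using Ppos
      by (intro divide_strict_left_mono) auto
    then have "3 / (16 * (real M + 1)) > 1 / (P * P)" by simp
    then have "1 / (P * P) < Sx / real n" using low by linarith
    then show ?thesis using avg rhs unfolding n_def[symmetric] by simp
  qed
qed

end


lemma powr_inv_bound: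
  fixes X d :: real and n :: nat
  assumes "d > 0" "X > 0" "real n \<ge> X powr (2/d)"
  shows "real n powr (d/2) \<ge> X"
proof -
  have "X = (X powr (2/d)) powr (d/2)" using assms by (simp add: powr_powr)
  also have "\<dots> \<le> real n powr (d/2)" using assms by (intro powr_mono2) auto
  finally show ?thesis .
qed

theorem theorem1p9:
  fixes \<delta> :: real
  assumes "\<delta> > 0"
  shows "\<not> (\<exists>\<Upsilon>. infinite \<Upsilon> \<and>
            (\<forall>G\<in>\<Upsilon>. \<exists>k l m. k > 0 \<and> l > 0 \<and> m > 0 \<and> G = metafunnel k l m) \<and>
            up_to_fixating (\<lambda>r n. real n powr (- \<delta>)) \<Upsilon>)"
proof
  assume "\<exists>\<Upsilon>. infinite \<Upsilon> \<and>
            (\<forall>G\<in>\<Upsilon>. \<exists>k l m. k > 0 \<and> l > 0 \<and> m > 0 \<and> G = metafunnel k l m) \<and>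
            up_to_fixating (\<lambda>r n. real n powr (- \<delta>)) \<Upsilon>"
  then obtain \<Upsilon> where inf: "infinite \<Upsilon>"
    and mfs: "\<forall>G\<in>\<Upsilon>. \<exists>k l m. k > 0 \<and> l > 0 \<and> m > 0 \<and> G = metafunnel k l m"
    and hfix: "up_to_fixating (\<lambda>r n. real n powr (- \<delta>)) \<Upsilon>" by blast
  obtain n0 where n0: "\<forall>G\<in>\<Upsilon>. card (fst G) \<ge> n0 \<longrightarrow>
        avg_extinction_prob (fst G) (snd G) 2 \<le> real (card (fst G)) powr (- \<delta>)"
    using hfix unfolding up_to_fixating_def by (meson one_less_numeral_iff semiring_norm(76))
  define M :: nat where "M = max 8 (nat \<lceil>4 powr (2/\<delta>)\<rceil>)"
  have M8: "M \<ge> 8" by (simp add: M_def)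
  have MP: "real M powr (\<delta>/2) \<ge> 4"
  proof (rule powr_inv_bound[OF assms])
    have "4 powr (2/\<delta>) \<le> real (nat \<lceil>4 powr (2/\<delta>)\<rceil>)" by linarith
    also have "\<dots> \<le> real M" by (simp add: M_def)
    finally show "real M \<ge> 4 powr (2/\<delta>)" .
  qed simp
  define X :: real where "X = 21 + 16 * (real M + 1)"
  define N :: nat where "N = max (max 9 n0) (nat \<lceil>X powr (2/\<delta>)\<rceil>)"
  obtain G where G: "G \<in> \<Upsilon>" "card (fst G) \<ge> N"
  proof (rule ccontr)
    assume "\<not> thesis"
    then have small: "\<forall>G\<in>\<Upsilon>. card (fst G) < N" using that by force
    have "\<Upsilon> \<subseteq> (\<lambda>(k,l,m). metafunnel k l m) ` ({..N} \<times> {..N} \<times> {..N})"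
    proof
      fix G assume GU: "G \<in> \<Upsilon>"
      then obtain k l m where kl: "k > 0" "l > 0" "m > 0" "G = metafunnel k l m" using mfs by blast
      interpret mf k l m using kl by unfold_locales
      have "card (fst G) < N" using small GU by blast
      then have "card (metafunnel_V k l m) < N" using kl by (simp add: metafunnel_def)
      then have "k \<le> N" "l \<le> N" "m \<le> N" using card_V_ge by auto
      then show "G \<in> (\<lambda>(k,l,m). metafunnel k l m) ` ({..N} \<times> {..N} \<times> {..N})"
        using kl by force
    qed
    then have "finite \<Upsilon>" by (rule finite_subset) auto
    then show False using inf by simp
  qed
  obtain k l m where kl: "k > 0" "l > 0" "m > 0" "G = metafunnel k l m" using mfs G by blast
  interpret mf k l m using kl by unfold_locales
  have fG: "fst G = metafunnel_V k l m" "snd G = metafunnel_E k l m" using kl by (auto simp: metafunnel_def)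
  have cN: "card (metafunnel_V k l m) \<ge> N" using G fG by simp
  have big: "real (card (metafunnel_V k l m)) powr (\<delta>/2) > 20 + 16 * (real M + 1)"
  proof -
    have "X powr (2/\<delta>) \<le> real (nat \<lceil>X powr (2/\<delta>)\<rceil>)" by linarith
    also have "\<dots> \<le> real N" by (simp add: N_def)
    also have "\<dots> \<le> real (card (metafunnel_V k l m))" using cN by simp
    finally have "real (card (metafunnel_V k l m)) powr (\<delta>/2) \<ge> X"
      using powr_inv_bound[OF assms] X_def by (simp add: add_pos_nonneg)
    then show ?thesis unfolding X_def by linarith
  qed
  have n9: "card (metafunnel_V k l m) \<ge> 9" using cN by (simp add: N_def)
  have "avg_extinction_prob (metafunnel_V k l m) (metafunnel_E k l m) 2
      > real (card (metafunnel_V k l m)) powr (- \<delta>)"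
    by (rule avg_bound[OF assms M8 MP big n9])
  moreover have "card (metafunnel_V k l m) \<ge> n0" using cN by (simp add: N_def)
  ultimately show False using n0 G fG by force
qed


end
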